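(* Let $n \geq 2$ be an integer. Consider $n$ independent random variables $X_1, \dots, X_n$, each taking values in the non-negative integers and each with $\mathbb{E}[X_i] = 1$ (not necessarily identically distributed), and write $p_i(j) = P(X_i = j)$. Among all such choices of the distributions $p_1, \dots, p_n$, consider one that minimizes $P\left(\sum_{i=1}^n X_i \leq n\right)$. Then for such a minimizing choice, $p_i(j) = 0$ for all $j > n+1$ and all $i = 1, \dots, n$.
   Context: The minimization is over all $n$-tuples of probability mass functions $p_1,\dots,p_n$ on $\{0,1,2,\dots\}$ with $\sum_j j\,p_i(j) = 1$ for each $i$, the $X_i$ being independent with these laws; the minimum is attained. *)

theory Defs
  imports "HOL-Probability.Probability"
begin

definition mean_one :: "nat pmf \<Rightarrow> bool" where
  "mean_one q \<longleftrightarrow> measure_pmf.expectation q real = 1"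

definition sum_le_prob :: "nat \<Rightarrow> (nat \<Rightarrow> nat pmf) \<Rightarrow> real" where
  "sum_le_prob n p =
     measure_pmf.prob (map_pmf (\<lambda>f. \<Sum>i<n. f i) (Pi_pmf {..<n} 0 p)) {..n}"

end

theory Submission
  imports Defs
begin

lemma mean_one_integrable:
  assumes "mean_one q" shows "integrable (measure_pmf q) real"
  using assms unfolding mean_one_def by (metis not_integrable_integral_eq zero_neq_one)

lemma mean_one_small:
  assumes "mean_one q" shows "pmf q 0 + pmf q 1 > 0"
proof -
  have int: "integrable (measure_pmf q) real" by (rule mean_one_integrable[OF assms])
  have "measure_pmf.expectation q (\<lambda>y. 2 * indicator {y. 2 \<le> y} y) \<le> measure_pmf.expectation q real"
    by (rule integral_mono[OF _ int]) (auto simp: indicator_def intro!: measure_pmf.integrable_const_bound[where B=2])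
  also have "\<dots> = 1" using assms by (simp add: mean_one_def)
  finally have "2 * measure_pmf.prob q {y. 2 \<le> y} \<le> 1" by simp
  moreover have "measure_pmf.prob q {y. 2 \<le> y} = 1 - measure_pmf.prob q {0,1}"
  proof -
    have "{y::nat. 2 \<le> y} = UNIV - {0,1}" by auto
    moreover have "measure_pmf.prob q (space (measure_pmf q) - {0,1}) = 1 - measure_pmf.prob q {0,1}"
      by (rule measure_pmf.prob_compl) simp
    ultimately show ?thesis by simp
  qed
  moreover have "measure_pmf.prob q {0,1} = pmf q 0 + pmf q 1"
    by (subst measure_measure_pmf_finite) auto
  ultimately show ?thesis by linarith
qed

lemma mean_one_mass0:
  assumes "mean_one q" "1 \<le> j" shows "(real j - 1) * pmf q j \<le> pmf q 0"
proof -
  have int: "integrable (measure_pmf q) real" by (rule mean_one_integrable[OF assms(1)])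
  have "measure_pmf.expectation q (\<lambda>y. indicator {y. 1 \<le> y} y + (real j - 1) * indicator {j} y) \<le> measure_pmf.expectation q real"
    by (rule integral_mono[OF _ int]) (use assms(2) in \<open>auto simp: indicator_def intro!: measure_pmf.integrable_const_bound[where B="real j"]\<close>)
  also have "\<dots> = 1" using assms by (simp add: mean_one_def)
  moreover have "measure_pmf.expectation q (\<lambda>y. indicator {y. 1 \<le> y} y + (real j - 1) * indicator {j} y)
     = measure_pmf.prob q {y. 1 \<le> y} + (real j - 1) * pmf q j"
  proof -
    have i1: "integrable (measure_pmf q) (indicator {y. 1 \<le> y} :: nat \<Rightarrow> real)"
      by (intro measure_pmf.integrable_const_bound[where B=1]) (auto simp: indicator_def)
    have i2: "integrable (measure_pmf q) (indicator {j} :: nat \<Rightarrow> real)"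
      by (intro measure_pmf.integrable_const_bound[where B=1]) (auto simp: indicator_def)
    show ?thesis
      by (subst Bochner_Integration.integral_add) (use i1 i2 in \<open>auto simp: measure_pmf_single\<close>)
  qed
  ultimately have "measure_pmf.prob q {y. 1 \<le> y} + (real j - 1) * pmf q j \<le> 1" by simp
  moreover have "measure_pmf.prob q {y. 1 \<le> y} = 1 - pmf q 0"
  proof -
    have "{y::nat. 1 \<le> y} = UNIV - {0}" by auto
    moreover have "measure_pmf.prob q (space (measure_pmf q) - {0}) = 1 - measure_pmf.prob q {0}"
      by (rule measure_pmf.prob_compl) simp
    ultimately show ?thesis by (simp add: measure_pmf_single)
  qed
  ultimately show ?thesis by linarith
qed

lemma sum_le_prob_split:
  assumes "i < n"
  shows "sum_le_prob n p = measure_pmf.prob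
     (pair_pmf (p i) (map_pmf (\<lambda>f. sum f ({..<n}-{i})) (Pi_pmf ({..<n}-{i}) 0 p))) {(y,t). y + t \<le> n}"
proof -
  define A where "A = {..<n} - {i}"
  have U: "{..<n} = insert i A" using assms by (auto simp: A_def)
  have fA: "finite A" "i \<notin> A" by (auto simp: A_def)
  have "sum_le_prob n p = measure_pmf.prob (map_pmf (\<lambda>f. \<Sum>k\<in>insert i A. f k)
      (map_pmf (\<lambda>(y,f). f(i:=y)) (pair_pmf (p i) (Pi_pmf A 0 p)))) {..n}"
    unfolding sum_le_prob_def U by (subst Pi_pmf_insert[OF fA]) simp
  also have "\<dots> = measure_pmf.prob (pair_pmf (p i) (Pi_pmf A 0 p))
       ((\<lambda>x. apsnd (\<lambda>f. sum f A) x) -` {(y,t). y + t \<le> n})"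
  proof -
    have "(\<lambda>x. \<Sum>k\<in>insert i A. (case x of (y, f) \<Rightarrow> f(i := y)) k) -` {..n}
        = (\<lambda>x. apsnd (\<lambda>f. sum f A) x) -` {(y,t). y + t \<le> n}"
    proof (intro set_eqI, clarify)
      fix y :: nat and f :: "nat \<Rightarrow> nat"
      have "(\<Sum>k\<in>A. (f(i := y)) k) = sum f A" using fA by (intro sum.cong) auto
      then show "((y, f) \<in> (\<lambda>x. \<Sum>k\<in>insert i A. (case x of (y, f) \<Rightarrow> f(i := y)) k) -` {..n}) =
         ((y, f) \<in> (\<lambda>x. apsnd (\<lambda>f. sum f A) x) -` {(y,t). y + t \<le> n})"
        using fA by simp
    qed
    then show ?thesis by (simp add: map_pmf_comp)
  qed
  also have "\<dots> = measure_pmf.prob (pair_pmf (p i) (map_pmf (\<lambda>f. sum f A) (Pi_pmf A 0 p))) {(y,t). y + t \<le> n}"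
    by (simp add: pair_map_pmf2)
  finally show ?thesis by (simp add: A_def)
qed

theorem lemma1:
  fixes n :: nat and p :: "nat \<Rightarrow> nat pmf"
  assumes "n \<ge> 2"
    and "\<forall>i<n. mean_one (p i)"
    and "\<forall>q :: nat \<Rightarrow> nat pmf. (\<forall>i<n. mean_one (q i)) \<longrightarrow> sum_le_prob n p \<le> sum_le_prob n q"
  shows "\<forall>i<n. \<forall>j>n+1. pmf (p i) j = 0"
proof (intro allI impI, rule ccontr)
  fix i j assume i: "i < n" and j: "j > n + 1" and nz: "pmf (p i) j \<noteq> 0"
  define a where "a = pmf (p i) j"
  define z where "z = pmf (p i) 0"
  have a: "a > 0" using nz pmf_nonneg[of "p i" j] unfolding a_def by linarith
  have mi: "mean_one (p i)" using assms(2) i by auto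
  have za: "(real j - 1) * a \<le> z" unfolding a_def z_def by (rule mean_one_mass0[OF mi]) (use j in auto)
  have jj: "real j - 1 \<ge> real n + 1" using j by linarith
  have z: "z > 0" proof -
    have "0 < (real j - 1) * a" using a jj by (intro mult_pos_pos) auto
    then show ?thesis using za by linarith
  qed
  define r where "r = a * (real j - real (n+1)) / (real (n+1) * z)"
  have r0: "r > 0" unfolding r_def using a z j by (auto intro!: divide_pos_pos mult_pos_pos)
  have r1: "r \<le> 1"
  proof -
    have "a * (real j - real (n+1)) \<le> (real j - 1) * a" using a by (simp add: mult_right_mono algebra_simps)
    also have "\<dots> \<le> z" by (rule za)
    also have "\<dots> \<le> real (n+1) * z" using z by simp
    finally show ?thesis unfolding r_def using z by (simp add: divide_le_eq_1)
  qed
  define B where "B = bernoulli_pmf r"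
  define \<phi> :: "nat \<times> bool \<Rightarrow> nat" where
    "\<phi> = (\<lambda>(y,b). if y = j then n+1 else if y = 0 \<and> b then n+1 else y)"
  define qi where "qi = map_pmf \<phi> (pair_pmf (p i) B)"
  define q where "q = p(i := qi)"
  have "mean_one qi"
  proof -
    let ?M = "pair_pmf (p i) B"
    have eq: "real (\<phi> x) = real (fst x) + (real (n+1) - real j) * indicator ({j} \<times> UNIV) x
        + real (n+1) * indicator ({0} \<times> {True}) x" for x
      using j by (cases x) (auto simp: \<phi>_def indicator_def)
    have i1: "integrable ?M (\<lambda>x. real (fst x))"
    proof -
      have "integrable (map_pmf fst ?M) real" using mean_one_integrable[OF mi] by (simp add: map_fst_pair_pmf)
      then show ?thesis by simp
    qed
    have i2: "integrable ?M (indicator ({j} \<times> UNIV) :: _ \<Rightarrow> real)"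
      by (intro measure_pmf.integrable_const_bound[where B=1]) (auto simp: indicator_def)
    have i3: "integrable ?M (indicator ({0::nat} \<times> {True}) :: _ \<Rightarrow> real)"
      by (intro measure_pmf.integrable_const_bound[where B=1]) (auto simp: indicator_def)
    have p2: "measure_pmf.prob ?M ({j} \<times> UNIV) = a"
      by (subst measure_pmf_prob_product) (auto simp: a_def measure_pmf_single)
    have p3: "measure_pmf.prob ?M ({0} \<times> {True}) = z * r"
      by (subst measure_pmf_prob_product) (use r0 r1 in \<open>auto simp: z_def B_def measure_pmf_single\<close>)
    have "measure_pmf.expectation qi real = measure_pmf.expectation ?M (\<lambda>x. real (\<phi> x))"
      by (simp add: qi_def)
    also have "\<dots> = measure_pmf.expectation ?M (\<lambda>x. real (fst x)) + (real (n+1) - real j) * a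
        + real (n+1) * (z * r)"
    proof -
      let ?f1 = "\<lambda>x. real (fst x)"
      let ?f2 = "\<lambda>x. (real (n+1) - real j) * (indicator ({j} \<times> UNIV) x :: real)"
      let ?f3 = "\<lambda>x. real (n+1) * (indicator ({0::nat} \<times> {True}) x :: real)"
      have j2: "integrable ?M ?f2" using i2 by (rule integrable_mult_right)
      have j3: "integrable ?M ?f3" using i3 by (rule integrable_mult_right)
      have j12: "integrable ?M (\<lambda>x. ?f1 x + ?f2 x)" using i1 j2 by (rule Bochner_Integration.integrable_add)
      have "measure_pmf.expectation ?M (\<lambda>x. ?f1 x + ?f2 x + ?f3 x)
          = measure_pmf.expectation ?M (\<lambda>x. ?f1 x + ?f2 x) + measure_pmf.expectation ?M ?f3"
        using j12 j3 by (rule Bochner_Integration.integral_add)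
      also have "measure_pmf.expectation ?M (\<lambda>x. ?f1 x + ?f2 x)
          = measure_pmf.expectation ?M ?f1 + measure_pmf.expectation ?M ?f2"
        using i1 j2 by (rule Bochner_Integration.integral_add)
      also have "measure_pmf.expectation ?M ?f2 = (real (n+1) - real j) * a"
        using p2 by simp
      also have "measure_pmf.expectation ?M ?f3 = real (n+1) * (z * r)"
        using p3 by simp
      finally show ?thesis unfolding eq by simp
    qed
    also have "measure_pmf.expectation ?M (\<lambda>x. real (fst x)) = 1"
      using mi by (simp add: mean_one_def)
    also have "real (n+1) * (z * r) = a * (real j - real (n+1))"
    proof -
      have d: "real (n+1) * z \<noteq> 0" using z by simp
      have "real (n+1) * (z * r) = (real (n+1) * z) * r" by (simp add: mult.assoc)
      also have "\<dots> = a * (real j - real (n+1))" unfolding r_def using d by simp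
      finally show ?thesis .
    qed
    finally show ?thesis unfolding mean_one_def by (simp add: algebra_simps)
  qed
  then have mq: "\<forall>k<n. mean_one (q k)" using assms(2) by (auto simp: q_def)
  define A where "A = {..<n} - {i}"
  define R where "R = map_pmf (\<lambda>f. sum f A) (Pi_pmf A 0 p)"
  have RR: "map_pmf (\<lambda>f. sum f A) (Pi_pmf A 0 q) = R"
    unfolding R_def q_def A_def by (intro arg_cong2[where f=map_pmf] refl Pi_pmf_cong) auto
  define \<Omega> where "\<Omega> = pair_pmf (pair_pmf (p i) B) R"
  define E where "E = {(y,t). y + t \<le> n}"
  have Pq: "sum_le_prob n q = measure_pmf.prob \<Omega> (apfst \<phi> -` E)"
  proof -
    have "sum_le_prob n q = measure_pmf.prob (pair_pmf qi R) E"
      using sum_le_prob_split[OF i, of q] RR by (simp add: A_def E_def q_def)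
    also have "pair_pmf qi R = map_pmf (apfst \<phi>) \<Omega>" by (simp add: qi_def \<Omega>_def pair_map_pmf1)
    finally show ?thesis by simp
  qed
  have Pp: "sum_le_prob n p = measure_pmf.prob \<Omega> (apfst fst -` E)"
  proof -
    have "sum_le_prob n p = measure_pmf.prob (pair_pmf (p i) R) E"
      using sum_le_prob_split[OF i, of p] by (simp add: A_def E_def R_def)
    also have "pair_pmf (p i) R = map_pmf (apfst fst) \<Omega>"
      by (simp add: \<Omega>_def pair_map_pmf1[symmetric] map_fst_pair_pmf)
    finally show ?thesis by simp
  qed
  define D where "D = ({0::nat} \<times> {True}) \<times> {..n}"
  have split: "apfst fst -` E = apfst \<phi> -` E \<union> D"
  proof (intro set_eqI)
    fix x :: "(nat \<times> bool) \<times> nat"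
    obtain y b t where x: "x = ((y,b),t)" by (metis prod.collapse)
    show "x \<in> apfst fst -` E \<longleftrightarrow> x \<in> apfst \<phi> -` E \<union> D"
      using j unfolding x by (cases "y = j"; cases "y = 0"; cases b) (auto simp: E_def D_def \<phi>_def)
  qed
  have disj: "apfst \<phi> -` E \<inter> D = {}"
    using j by (auto simp: E_def D_def \<phi>_def split: if_splits)
  have PT: "measure_pmf.prob R {..n} > 0"
  proof -
    define g where "g = (\<lambda>k. if k \<in> A then (if pmf (p k) 0 > 0 then 0 else 1) else 0::nat)"
    have fA: "finite A" by (simp add: A_def)
    have gpos: "pmf (p k) (g k) > 0" if "k \<in> A" for k
    proof -
      have "mean_one (p k)" using that assms(2) by (auto simp: A_def)
      from mean_one_small[OF this] have s: "0 < pmf (p k) 0 + pmf (p k) 1" .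
      show ?thesis
      proof (cases "pmf (p k) 0 > 0")
        case True then show ?thesis using that by (simp add: g_def)
      next
        case False
        then have "pmf (p k) 0 = 0" using pmf_nonneg[of "p k" 0] by linarith
        then show ?thesis using that s False by (simp add: g_def)
      qed
    qed
    have "pmf (Pi_pmf A 0 p) g = (\<Prod>k\<in>A. pmf (p k) (g k))"
      by (rule pmf_Pi'[OF fA]) (auto simp: g_def)
    also have "\<dots> > 0" using gpos by (intro prod_pos) auto
    finally have pg: "pmf (Pi_pmf A 0 p) g > 0" .
    have g1: "\<And>k. k \<in> A \<Longrightarrow> g k \<le> 1" by (simp add: g_def)
    have "sum g A \<le> card A" using sum_bounded_above[of A g 1, OF g1] by simp
    also have "card A = n - 1" using i by (simp add: A_def)
    finally have "sum g A \<le> n" by simp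
    then have "{g} \<subseteq> (\<lambda>f. sum f A) -` {..n}" by auto
    then have "measure_pmf.prob (Pi_pmf A 0 p) {g} \<le> measure_pmf.prob (Pi_pmf A 0 p) ((\<lambda>f. sum f A) -` {..n})"
      by (intro measure_pmf.finite_measure_mono) auto
    then show ?thesis using pg by (simp add: R_def measure_pmf_single)
  qed
  have PD: "measure_pmf.prob \<Omega> D = z * r * measure_pmf.prob R {..n}"
    unfolding \<Omega>_def D_def
    by (subst measure_pmf_prob_product, simp, simp, subst measure_pmf_prob_product)
       (use r0 r1 in \<open>auto simp: z_def B_def measure_pmf_single\<close>)
  have "sum_le_prob n p = sum_le_prob n q + measure_pmf.prob \<Omega> D"
    unfolding Pp Pq split using disj by (subst measure_pmf.finite_measure_Union) auto
  moreover have "measure_pmf.prob \<Omega> D > 0" unfolding PD using z r0 PT by simp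
  moreover have "sum_le_prob n p \<le> sum_le_prob n q" using assms(3) mq by blast
  ultimately show False by linarith
qed

end
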